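(* For every $n\ge1$, \[S_{1,0}(2n)=0,\qquad S_{1,0}(2n-1)=\frac{B_{2n}}{n},\qquad S_{2,0}(2n)=-\frac{B_{2n}}{2n}.\]
   Context: $B_m$ denotes the $m$-th Bernoulli number ($B_2=\tfrac16$, $B_4=-\tfrac1{30}$, ...). Let $a_0,a_1,\dots$ be indeterminates and $a(x)=\sum_{i\ge0}a_ix^i$. For a positive integer $j$ set $G(x)=\prod_{i=0}^{j-1}\frac{1+a(x)x^2}{1+ix}$, $H(x)=\prod_{i=1-j}^{-1}\frac{1+ix}{1+a(x)x^2}$, $u=2j-1$, $v=j(j-1)$. For each $n\ge1$ there are unique polynomials $S_0(n),\dots,S_n(n)\in\mathbb{Q}[a_0,\dots,a_{n-2}]$, independent of $j$, such that for every positive integer $j$ the coefficient of $x^{n-1}$ in $\frac{G(x)-H(x)}{x^2}(1+a(x)x^2)$ equals $u\big(a_{n-1}+S_0(n)+\sum_{i=1}^nS_i(n)v^i\big)$. For $1\le i\le n$, $S_{i,0}(n)\in\mathbb{Q}$ denotes the constant term of $S_i(n)$. *)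

theory Defs
  imports "HOL-Computational_Algebra.Formal_Power_Series"
begin

text \<open>Bernoulli numbers with B_0 = 1, B_1 = -1/2 (only even indices are used).\<close>
fun bernoulli :: "nat \<Rightarrow> rat" where
  "bernoulli m = (if m = 0 then 1
     else - (\<Sum>k<m. of_nat (Suc m choose k) * bernoulli k) / of_nat (Suc m))"

text \<open>a(x) = sum a_i x^i for a concrete assignment of the indeterminates.\<close>
definition a_fps :: "(nat \<Rightarrow> rat) \<Rightarrow> rat fps" where
  "a_fps a = Abs_fps a"

definition G_fps :: "(nat \<Rightarrow> rat) \<Rightarrow> nat \<Rightarrow> rat fps" where
  "G_fps a j = (\<Prod>i<j. (1 + a_fps a * fps_X ^ 2) * inverse (1 + of_nat i * fps_X))"

text \<open>Product over i = 1-j, ..., -1, written with k = -i in {1..j-1}.\<close>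
definition H_fps :: "(nat \<Rightarrow> rat) \<Rightarrow> nat \<Rightarrow> rat fps" where
  "H_fps a j = (\<Prod>k\<in>{1..<j}. (1 - of_nat k * fps_X) * inverse (1 + a_fps a * fps_X ^ 2))"

text \<open>(G(x) - H(x))/x^2 * (1 + a(x) x^2); G - H is divisible by x^2.\<close>
definition E_fps :: "(nat \<Rightarrow> rat) \<Rightarrow> nat \<Rightarrow> rat fps" where
  "E_fps a j = fps_shift 2 (G_fps a j - H_fps a j) * (1 + a_fps a * fps_X ^ 2)"

text \<open>c i plays the role of the constant term S_{i,0}(n) (c 0 that of S_0(n)):
  the defining identity specialised at a_0 = a_1 = ... = 0.\<close>
definition S_const_coeffs :: "nat \<Rightarrow> (nat \<Rightarrow> rat) \<Rightarrow> bool" where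
  "S_const_coeffs n c \<longleftrightarrow>
     (\<forall>j::nat. j \<ge> 1 \<longrightarrow>
        fps_nth (E_fps (\<lambda>_. 0) j) (n - 1) =
          (2 * of_nat j - 1) * (0 + c 0 + (\<Sum>i=1..n. c i * (of_nat j * (of_nat j - 1)) ^ i)))"

end

theory Submission
  imports Defs "HOL-Computational_Algebra.Polynomial"
begin

unbundle fps_syntax


fun Pf :: "nat \<Rightarrow> rat poly" where
  "Pf k = smult (1 / of_nat (Suc k)) (monom 1 (Suc k) - (\<Sum>i<k. smult (of_nat (Suc k choose i)) (Pf i)))"

declare Pf.simps[simp del]

lemma telesc: "(\<Sum>a<j. ((of_nat a + 1::rat) ^ Suc k - of_nat a ^ Suc k)) = of_nat j ^ Suc k"
  by (induction j) (simp_all add: power_0_left add.commute)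

lemma Pf_sum: "poly (Pf k) (of_nat j) = (\<Sum>a<j. (of_nat a::rat) ^ k)"
proof (induction k rule: less_induct)
  case (less k)
  have bin: "(of_nat a + 1::rat) ^ Suc k - of_nat a ^ Suc k = (\<Sum>i<Suc k. of_nat (Suc k choose i) * of_nat a ^ i)" for a
    using binomial_ring[of "of_nat a::rat" 1 "Suc k"] by (simp add: atMost_Suc lessThan_Suc_atMost[symmetric] add.commute)
  have "(\<Sum>i<k. of_nat (Suc k choose i) * (\<Sum>a<j. (of_nat a::rat) ^ i)) + of_nat (Suc k) * (\<Sum>a<j. (of_nat a::rat) ^ k)
     = (\<Sum>a<j. (\<Sum>i<Suc k. of_nat (Suc k choose i) * of_nat a ^ i))"
    by (simp add: sum_distrib_left sum.swap[of _ "{..<j}"] sum.distrib)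
  also have "\<dots> = (\<Sum>a<j. ((of_nat a + 1::rat) ^ Suc k - of_nat a ^ Suc k))" by (simp only: bin)
  also have "\<dots> = of_nat j ^ Suc k" by (rule telesc)
  finally have eq: "(\<Sum>i<k. of_nat (Suc k choose i) * (\<Sum>a<j. (of_nat a::rat) ^ i)) + of_nat (Suc k) * (\<Sum>a<j. (of_nat a::rat) ^ k) = of_nat j ^ Suc k" .
  have "poly (Pf k) (of_nat j) = (of_nat j ^ Suc k - (\<Sum>i<k. of_nat (Suc k choose i) * (\<Sum>a<j. (of_nat a::rat) ^ i))) / of_nat (Suc k)"
    by (subst Pf.simps) (simp add: poly_sum poly_monom less divide_inverse mult.commute)
  also have "\<dots> = (\<Sum>a<j. (of_nat a::rat) ^ k)" using eq
    by (simp add: field_simps del: of_nat_Suc)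
  finally show ?case .
qed

lemma Pf_coeff0: "coeff (Pf k) 0 = 0"
  by (induction k rule: less_induct) (subst Pf.simps, simp add: coeff_sum)

lemma Pf_coeff1: "coeff (Pf k) 1 = bernoulli k"
proof (induction k rule: less_induct)
  case (less k)
  show ?case
  proof (cases k)
    case 0 then show ?thesis by (subst Pf.simps) simp
  next
    case (Suc k')
    have h: "\<And>i. i < k' \<Longrightarrow> coeff (Pf i) (Suc 0) = bernoulli i" "coeff (Pf k') (Suc 0) = bernoulli k'"
      using less Suc by auto
    from Suc show ?thesis
      by (subst Pf.simps, subst bernoulli.simps) (simp add: coeff_sum h divide_inverse mult.commute sum_distrib_left del: bernoulli.simps)
  qed
qed

lemma Pf_degree: "degree (Pf k) \<le> Suc k"
proof (induction k rule: less_induct)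
  case (less k)
  have "degree (\<Sum>i<k. smult (of_nat (Suc k choose i)) (Pf i)) \<le> Suc k"
  proof (rule degree_sum_le)
    fix i assume "i \<in> {..<k}"
    then have "degree (Pf i) \<le> Suc i" using less by simp
    then show "degree (smult (of_nat (Suc k choose i)) (Pf i)) \<le> Suc k"
      using \<open>i \<in> {..<k}\<close> degree_smult_le[of "of_nat (Suc k choose i)" "Pf i"] by simp
  qed simp
  then have "degree (monom (1::rat) (Suc k) - (\<Sum>i<k. smult (of_nat (Suc k choose i)) (Pf i))) \<le> Suc k"
    using degree_diff_le[of "monom (1::rat) (Suc k)"] degree_monom_le[of "1::rat" "Suc k"] by blast
  then show ?case
    by (subst Pf.simps) (rule order.trans[OF degree_smult_le])
qed

lemma poly_zero_inj:
  fixes p :: "rat poly" and f :: "nat \<Rightarrow> rat"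
  assumes "inj f" "\<And>j. poly p (f j) = 0"
  shows "p = 0"
proof (rule ccontr)
  assume "p \<noteq> 0"
  then have "finite {x. poly p x = 0}" by (rule poly_roots_finite)
  moreover have "range f \<subseteq> {x. poly p x = 0}" using assms(2) by auto
  ultimately have "finite (range f)" by (rule finite_subset[rotated])
  with range_inj_infinite[OF assms(1)] show False by simp
qed

lemma poly_zero_nat:
  fixes p :: "rat poly"
  assumes "\<And>j. poly p (of_nat j) = 0"
  shows "p = 0"
  by (rule poly_zero_inj[of of_nat]) (auto simp: inj_on_def assms)

lemma Pf_shift: "pcompose (Pf k) [:1,1:] = Pf k + monom 1 k"
proof -
  have "poly (pcompose (Pf k) [:1,1:] - (Pf k + monom 1 k)) (of_nat j) = 0" for j
    using Pf_sum[of k "Suc j"] Pf_sum[of k j]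
    by (simp add: poly_pcompose poly_monom add.commute)
  then have "pcompose (Pf k) [:1,1:] - (Pf k + monom 1 k) = 0" by (rule poly_zero_nat)
  then show ?thesis by simp
qed

lemma Pf_shift_poly: "poly (Pf k) (x + 1) = poly (Pf k) x + x ^ k"
  using arg_cong[OF Pf_shift, of "\<lambda>p. poly p x"] by (simp add: poly_pcompose poly_monom add.commute)

lemma Pf_refl:
  assumes "k \<ge> 1"
  shows "pcompose (Pf k) [:1,-1:] = smult ((-1) ^ Suc k) (Pf k)"
proof -
  define Z where "Z = pcompose (Pf k) [:1,-1:] - smult ((-1) ^ Suc k) (Pf k)"
  have Zx: "poly Z x = poly (Pf k) (1 - x) - (-1) ^ Suc k * poly (Pf k) x" for x
  proof -
    have "poly Z x = poly (pcompose (Pf k) [:1,-1:]) x - (-1) ^ Suc k * poly (Pf k) x"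
      unfolding Z_def by (simp only: poly_diff poly_smult)
    also have "poly (pcompose (Pf k) [:1,-1:]) x = poly (Pf k) (poly [:1,-1:] x)"
      by (rule poly_pcompose)
    also have "poly [:1,-1:] x = 1 - x" by simp
    finally show ?thesis .
  qed
  have step: "poly Z (x + 1) = poly Z x" for x
  proof -
    have a: "poly (Pf k) (1 - x) = poly (Pf k) (- x) + (- x) ^ k"
    proof -
      have "poly (Pf k) (1 - x) = poly (Pf k) (- x + 1)" by simp
      also have "\<dots> = poly (Pf k) (- x) + (- x) ^ k" by (rule Pf_shift_poly)
      finally show ?thesis .
    qed
    have b: "poly (Pf k) (x + 1) = poly (Pf k) x + x ^ k" by (rule Pf_shift_poly)
    have c: "(- x) ^ k = (-1) ^ k * x ^ k" by (rule power_minus)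
    have e: "poly Z (x + 1) = poly (Pf k) (- x) - (-1) ^ Suc k * (poly (Pf k) x + x ^ k)"
      unfolding Zx b by simp
    have f: "poly Z x = (poly (Pf k) (- x) + (-1) ^ k * x ^ k) - (-1) ^ Suc k * poly (Pf k) x"
      unfolding Zx a c by simp
    have g: "\<And>A B X y::rat. A - (- y) * (B + X) = (A + y * X) - (- y) * B"
      by (simp add: algebra_simps)
    show ?thesis unfolding e f power_Suc by (simp only: g mult_minus1)
  qed
  have p1: "poly (Pf k) 1 = 0"
    using Pf_sum[of k 1] assms by simp
  have p0: "poly (Pf k) 0 = 0"
    using Pf_sum[of k 0] by simp
  have z0: "poly Z 0 = 0"
    unfolding Zx using p0 p1 by simp
  have "poly Z (of_nat j) = 0" for j
  proof (induction j)
    case 0 then show ?case using z0 by simp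
  next
    case (Suc j)
    have "poly Z (of_nat (Suc j)) = poly Z (of_nat j + 1)" by (simp add: add.commute)
    also have "\<dots> = poly Z (of_nat j)" by (rule step)
    finally show ?case using Suc by simp
  qed
  then have "Z = 0" using poly_zero_nat by auto
  then show ?thesis by (simp add: Z_def)
qed

lemma bernoulli_odd:
  assumes "odd k" "k \<ge> 3"
  shows "bernoulli k = 0"
proof -
  have "pcompose [:1,1:] [:0,-1::rat:] = [:1,-1:]" by (simp add: pcompose_pCons)
  then have "pcompose (Pf k) [:1,-1:] = pcompose (Pf k + monom 1 k) [:0,-1:]"
    by (metis Pf_shift pcompose_assoc)
  then have "coeff (smult ((-1) ^ Suc k) (Pf k)) 1 = coeff (pcompose (Pf k + monom 1 k) [:0,-1:]) 1"
    using Pf_refl[of k] assms by simp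
  then have "coeff (Pf k) 1 = - coeff (Pf k) 1"
    using assms by (simp add: coeff_pcompose_linear del: One_nat_def)
  then show ?thesis using Pf_coeff1[of k] by simp
qed



fun Fr :: "(nat \<Rightarrow> rat poly) \<Rightarrow> nat \<Rightarrow> rat poly" where
  "Fr W 0 = 1"
| "Fr W (Suc m) = smult (1 / of_nat (Suc m)) (\<Sum>i=0..m. Fr W i * W (m - i))"

declare Fr.simps(2)[simp del]

lemma Fr_eval:
  fixes S w :: "rat fps"
  assumes "S $ 0 = 1" "fps_deriv S = S * w" "\<And>r. poly (W r) x = w $ r"
  shows "poly (Fr W m) x = S $ m"
proof (induction m rule: less_induct)
  case (less m)
  show ?case
  proof (cases m)
    case 0 then show ?thesis using assms by simp
  next
    case (Suc m')
    have "of_nat (Suc m') * S $ Suc m' = fps_deriv S $ m'" by (simp add: mult.commute)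
    also have "\<dots> = (\<Sum>i=0..m'. S $ i * w $ (m' - i))" using assms(2) by (simp add: fps_mult_nth)
    also have "\<dots> = (\<Sum>i=0..m'. poly (Fr W i) x * poly (W (m' - i)) x)"
      using less Suc assms(3) by (intro sum.cong) auto
    finally have eq: "of_nat (Suc m') * S $ Suc m' = (\<Sum>i=0..m'. poly (Fr W i) x * poly (W (m' - i)) x)" .
    have "poly (Fr W (Suc m')) x = (\<Sum>i=0..m'. poly (Fr W i) x * poly (W (m' - i)) x) / of_nat (Suc m')"
      by (simp add: Fr.simps(2) poly_sum divide_inverse mult.commute del: of_nat_Suc)
    also have "\<dots> = S $ Suc m'" using eq by (simp add: field_simps del: of_nat_Suc)
    finally show ?thesis using Suc by simp
  qed
qed

lemma Fr_pcomp:
  assumes "\<And>r. pcompose (W1 r) c = W2 r"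
  shows "pcompose (Fr W1 m) c = Fr W2 m"
proof (induction m rule: less_induct)
  case (less m)
  show ?case
  proof (cases m)
    case 0 then show ?thesis by (simp add: pcompose_1)
  next
    case (Suc m')
    have "(\<Sum>i=0..m'. pcompose (Fr W1 i) c * pcompose (W1 (m' - i)) c) = (\<Sum>i=0..m'. Fr W2 i * W2 (m' - i))"
      using less Suc assms by (intro sum.cong) auto
    then show ?thesis using Suc
      by (simp add: Fr.simps(2) pcompose_smult pcompose_sum pcompose_mult)
  qed
qed

lemma Fr_deg:
  assumes "\<And>r. degree (W r) \<le> r + 2"
  shows "degree (Fr W m) \<le> 2 * m"
proof (induction m rule: less_induct)
  case (less m)
  show ?case
  proof (cases m)
    case 0 then show ?thesis by simp
  next
    case (Suc m')
    have "degree (\<Sum>i=0..m'. Fr W i * W (m' - i)) \<le> 2 * m"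
    proof (rule degree_sum_le)
      fix i assume i: "i \<in> {0..m'}"
      have "degree (Fr W i * W (m' - i)) \<le> degree (Fr W i) + degree (W (m' - i))"
        by (rule degree_mult_le)
      also have "\<dots> \<le> 2 * i + (m' - i + 2)"
        using less[of i] assms[of "m' - i"] i Suc by (intro add_mono) auto
      also have "\<dots> \<le> 2 * m" using i Suc by auto
      finally show "degree (Fr W i * W (m' - i)) \<le> 2 * m" .
    qed simp
    then show ?thesis using Suc
      by (simp add: Fr.simps(2))
  qed
qed

lemma coeff_mult_1: "coeff (p * q) (Suc 0) = coeff p 0 * coeff q (Suc 0) + coeff p (Suc 0) * coeff (q::rat poly) 0"
  by (simp add: coeff_mult atMost_Suc)

lemma coeff_mult_2: "coeff (p * q) 2 = coeff p 0 * coeff q 2 + coeff p 1 * coeff q 1 + coeff p 2 * coeff (q::rat poly) 0"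
  by (simp add: coeff_mult atMost_Suc numeral_2_eq_2)

lemma Fr_c0:
  assumes "\<And>r. coeff (W r) 0 = 0"
  shows "coeff (Fr W m) 0 = (if m = 0 then 1 else 0)"
  by (cases m) (simp_all add: Fr.simps(2) coeff_sum assms coeff_mult)

lemma Fr_c1:
  assumes "\<And>r. coeff (W r) 0 = 0"
  shows "coeff (Fr W (Suc m)) 1 = coeff (W m) 1 / of_nat (Suc m)"
proof -
  have "coeff (\<Sum>i=0..m. Fr W i * W (m - i)) 1 = (\<Sum>i=0..m. if i = 0 then coeff (W (m - i)) 1 else 0)"
    unfolding coeff_sum by (intro sum.cong) (auto simp: coeff_mult_1 Fr_c0 assms)
  also have "\<dots> = coeff (W m) 1" by (subst sum.delta) auto
  finally show ?thesis by (simp add: Fr.simps(2) divide_inverse mult.commute del: of_nat_Suc)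
qed

lemma Fr_c2:
  assumes "\<And>r. coeff (W r) 0 = 0"
  shows "coeff (Fr W (Suc m)) 2 = (coeff (W m) 2 + (\<Sum>i=0..m. coeff (Fr W i) 1 * coeff (W (m - i)) 1)) / of_nat (Suc m)"
proof -
  have "coeff (\<Sum>i=0..m. Fr W i * W (m - i)) 2 = (\<Sum>i=0..m. (if i = 0 then coeff (W (m - i)) 2 else 0) + coeff (Fr W i) 1 * coeff (W (m - i)) 1)"
    unfolding coeff_sum by (intro sum.cong) (auto simp: coeff_mult_2 Fr_c0 assms)
  also have "\<dots> = coeff (W m) 2 + (\<Sum>i=0..m. coeff (Fr W i) 1 * coeff (W (m - i)) 1)"
    by (simp add: sum.distrib)
  finally show ?thesis by (simp add: Fr.simps(2) divide_inverse mult.commute del: of_nat_Suc)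
qed



definition Ag :: "rat \<Rightarrow> rat fps" where "Ag c = Abs_fps (\<lambda>r. (- c) ^ r)"
definition Bh :: "rat \<Rightarrow> rat fps" where "Bh c = 1 - fps_const c * fps_X"
definition Ch :: "rat \<Rightarrow> rat fps" where "Ch c = Abs_fps (\<lambda>r. - (c ^ Suc r))"

lemma Ag_inv: "(1 + fps_const c * fps_X) * Ag c = 1"
proof (rule fps_ext)
  fix n
  show "((1 + fps_const c * fps_X) * Ag c) $ n = (1::rat fps) $ n"
    by (cases n) (simp_all add: Ag_def distrib_right mult.assoc)
qed

lemma Ag_term:
  assumes "i \<le> r"
  shows "(- c) ^ i * ((- c) * (- c) ^ (r - i)) = ((- c) ^ Suc r :: rat)"
proof -
  have "(- c) ^ i * (- c) ^ (r - i) = ((- c) ^ r :: rat)"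
    using assms by (simp add: power_add[symmetric])
  then show ?thesis by (metis mult.left_commute power_Suc)
qed

lemma Ag_term2:
  assumes "i \<le> r"
  shows "- ((- c) ^ i * (c * (- c) ^ (r - i))) = ((- c) ^ Suc r :: rat)"
  using Ag_term[OF assms, of c] by simp

lemma Ag_mult_nth: "(Ag c * (fps_const (- c) * Ag c)) $ r = of_nat (Suc r) * (- c) ^ Suc r"
proof -
  have "(Ag c * (fps_const (- c) * Ag c)) $ r = (\<Sum>i=0..r. (- c) ^ Suc r)"
    unfolding fps_mult_nth[of "Ag c"] by (rule sum.cong) (auto simp: Ag_def Ag_term2 simp del: power_Suc)
  then show ?thesis by simp
qed

lemma Ag_deriv: "fps_deriv (Ag c) = Ag c * (fps_const (- c) * Ag c)"
  by (rule fps_ext) (simp only: Ag_mult_nth fps_deriv_nth, simp add: Ag_def)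

lemma Bh_deriv: "fps_deriv (Bh c) = Bh c * Ch c"
proof (rule fps_ext)
  fix n
  show "fps_deriv (Bh c) $ n = (Bh c * Ch c) $ n"
    by (cases n) (simp_all add: Bh_def Ch_def algebra_simps)
qed

definition Gprod :: "nat \<Rightarrow> rat fps" where "Gprod j = (\<Prod>i<j. Ag (of_nat i))"
definition WG :: "nat \<Rightarrow> rat fps" where "WG j = (\<Sum>i<j. fps_const (- of_nat i) * Ag (of_nat i))"
definition Hprod :: "nat \<Rightarrow> rat fps" where "Hprod j = (\<Prod>i<j. Bh (of_nat i))"
definition WH :: "nat \<Rightarrow> rat fps" where "WH j = (\<Sum>i<j. Ch (of_nat i))"

lemma Gprod_0: "Gprod j $ 0 = 1"
  by (induction j) (simp_all add: Gprod_def Ag_def)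

lemma Hprod_0: "Hprod j $ 0 = 1"
  by (induction j) (simp_all add: Hprod_def Bh_def)

lemma Gprod_deriv: "fps_deriv (Gprod j) = Gprod j * WG j"
proof (induction j)
  case 0 then show ?case by (simp add: Gprod_def WG_def)
next
  case (Suc j)
  have "fps_deriv (Gprod (Suc j)) = fps_deriv (Gprod j * Ag (of_nat j))"
    by (simp add: Gprod_def)
  also have "\<dots> = Gprod j * (Ag (of_nat j) * (fps_const (- of_nat j) * Ag (of_nat j))) + Gprod j * WG j * Ag (of_nat j)"
    by (simp add: Suc Ag_deriv)
  also have "\<dots> = (Gprod j * Ag (of_nat j)) * (WG j + fps_const (- of_nat j) * Ag (of_nat j))"
    by (simp add: algebra_simps)
  also have "\<dots> = Gprod (Suc j) * WG (Suc j)" by (simp add: Gprod_def WG_def)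
  finally show ?case .
qed

lemma Hprod_deriv: "fps_deriv (Hprod j) = Hprod j * WH j"
proof (induction j)
  case 0 then show ?case by (simp add: Hprod_def WH_def)
next
  case (Suc j)
  have "fps_deriv (Hprod (Suc j)) = fps_deriv (Hprod j * Bh (of_nat j))"
    by (simp add: Hprod_def)
  also have "\<dots> = Hprod j * (Bh (of_nat j) * Ch (of_nat j)) + Hprod j * WH j * Bh (of_nat j)"
    by (simp add: Suc Bh_deriv)
  also have "\<dots> = (Hprod j * Bh (of_nat j)) * (WH j + Ch (of_nat j))"
    by (simp add: algebra_simps)
  also have "\<dots> = Hprod (Suc j) * WH (Suc j)" by (simp add: Hprod_def WH_def)
  finally show ?case .
qed

definition WGp :: "nat \<Rightarrow> rat poly" where "WGp r = smult ((-1) ^ Suc r) (Pf (Suc r))"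
definition WHp :: "nat \<Rightarrow> rat poly" where "WHp r = - Pf (Suc r)"

lemma neg_pow: "- (x * (- x) ^ r) = (-1::rat) ^ Suc r * x ^ Suc r"
  by (simp add: power_minus[of x r])

lemma WG_nth: "WG j $ r = poly (WGp r) (of_nat j)"
proof -
  have "WG j $ r = (\<Sum>i<j. (-1) ^ Suc r * (of_nat i) ^ Suc r)"
    unfolding WG_def fps_sum_nth
    by (intro sum.cong refl) (simp add: Ag_def neg_pow del: power_Suc)
  also have "\<dots> = poly (WGp r) (of_nat j)"
    by (simp add: WGp_def Pf_sum sum_distrib_left sum_negf)
  finally show ?thesis .
qed

lemma WH_nth: "WH j $ r = poly (WHp r) (of_nat j)"
  unfolding WH_def fps_sum_nth WHp_def by (simp add: Ch_def Pf_sum sum_negf)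

lemma sign_sq: "(-1::rat) ^ r * (-1) ^ r = 1"
  by (induction r) auto

lemma WGp_refl: "pcompose (WGp r) [:1,-1:] = WHp r"
proof -
  have "pcompose (WGp r) [:1,-1:] = smult ((-1) ^ Suc r * (-1) ^ Suc (Suc r)) (Pf (Suc r))"
  proof -
    have "pcompose (Pf (Suc r)) [:1,-1:] = smult ((-1)^Suc(Suc r)) (Pf (Suc r))" by (rule Pf_refl) simp
    then show ?thesis unfolding WGp_def pcompose_smult smult_smult by simp
  qed
  also have "(-1::rat) ^ Suc r * (-1) ^ Suc (Suc r) = -1"
    using sign_sq[of r] by simp
  finally show ?thesis by (simp add: WHp_def)
qed

lemma WGp_deg: "degree (WGp r) \<le> r + 2"
  unfolding WGp_def using degree_smult_le Pf_degree[of "Suc r"] by (metis add_2_eq_Suc' order.trans)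
lemma WHp_deg: "degree (WHp r) \<le> r + 2"
  unfolding WHp_def using Pf_degree[of "Suc r"] by simp
lemma WGp_c0: "coeff (WGp r) 0 = 0" by (simp add: WGp_def Pf_coeff0)
lemma WHp_c0: "coeff (WHp r) 0 = 0" by (simp add: WHp_def Pf_coeff0)
lemma Pf_coeff1': "coeff (Pf k) (Suc 0) = bernoulli k" using Pf_coeff1 by simp

lemma WGp_c1: "coeff (WGp r) 1 = (-1) ^ Suc r * bernoulli (Suc r)" by (simp add: WGp_def Pf_coeff1' del: bernoulli.simps)
lemma WHp_c1: "coeff (WHp r) 1 = - bernoulli (Suc r)" by (simp add: WHp_def Pf_coeff1' del: bernoulli.simps)

lemma G_eval: "poly (Fr WGp m) (of_nat j) = Gprod j $ m"
  by (rule Fr_eval[OF Gprod_0 Gprod_deriv]) (simp add: WG_nth)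

lemma H_eval: "poly (Fr WHp m) (of_nat j) = Hprod j $ m"
  by (rule Fr_eval[OF Hprod_0 Hprod_deriv]) (simp add: WH_nth)

lemma GH_refl: "pcompose (Fr WGp m) [:1,-1:] = Fr WHp m"
  by (rule Fr_pcomp) (rule WGp_refl)

lemma a_fps_0: "a_fps (\<lambda>_. 0) = 0"
  by (simp add: a_fps_def fps_eq_iff)

lemma G_fps_eq: "G_fps (\<lambda>_. 0) j = Gprod j"
proof -
  have "inverse (1 + of_nat i * fps_X) = Ag (of_nat i)" for i
    using fps_inverse_unique[OF Ag_inv[of "of_nat i"]] by (simp add: fps_of_nat)
  then show ?thesis by (simp add: G_fps_def Gprod_def a_fps_0)
qed

lemma prod_from1:
  assumes "f 0 = 1" shows "(\<Prod>k\<in>{Suc 0..<j}. f k) = (\<Prod>k<j. (f k :: rat fps))"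
proof (induction j)
  case 0 then show ?case by simp
next
  case (Suc j)
  then show ?case using assms
    by (cases j) (simp_all add: prod.atLeastLessThan_Suc)
qed

lemma H_fps_eq: "H_fps (\<lambda>_. 0) j = Hprod j"
  unfolding H_fps_def Hprod_def a_fps_0
  by (simp add: prod_from1[where f = "\<lambda>k. 1 - of_nat k * fps_X"] Bh_def fps_of_nat)

lemma E_nth:
  assumes "N \<ge> 1"
  shows "E_fps (\<lambda>_. 0) j $ (N - 1) = poly (Fr WGp (Suc N) - Fr WHp (Suc N)) (of_nat j)"
  using assms by (simp add: E_fps_def G_fps_eq H_fps_eq a_fps_0 G_eval H_eval)



lemma v_comp: "pcompose [:0,-1,1:] [:1,-1:] = ([:0,-1,1:] :: rat poly)"
  by (simp add: pcompose_pCons)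

lemma v_fact: "[:0,1:] * [:-1,1:] = ([:0,-1,1:] :: rat poly)"
  by simp

lemma sym_lemma:
  "\<And>K :: rat poly. pcompose K [:1,-1:] = K \<Longrightarrow> degree K \<le> 2*d+1 \<Longrightarrow>
     \<exists>Q. degree Q \<le> d \<and> K = pcompose Q [:0,-1,1:]"
proof (induction d)
  case 0
  fix K :: "rat poly" assume sym: "pcompose K [:1,-1:] = K" and deg: "degree K \<le> 2*0+1"
  show "\<exists>Q. degree Q \<le> 0 \<and> K = pcompose Q [:0,-1,1:]"
  proof -
    have "poly K 1 = poly K 0"
      using arg_cong[OF sym, of "\<lambda>p. poly p 0"] by (simp add: poly_pcompose)
    moreover have KK: "K = [:coeff K 0, coeff K 1:]"
      using deg by (intro poly_eqI) (auto simp: coeff_pCons coeff_eq_0 split: nat.splits)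
    moreover have "poly [:coeff K 0, coeff K 1:] 1 = coeff K 0 + coeff K 1"
      "poly [:coeff K 0, coeff K 1:] 0 = coeff K 0" by simp_all
    ultimately have "coeff K 1 = 0" by simp
    define c where "c = coeff K 0"
    have Kc: "K = [:c:]"
      using \<open>K = [:coeff K 0, coeff K 1:]\<close> \<open>coeff K 1 = 0\<close> unfolding c_def by simp
    show ?thesis by (intro exI[of _ "[:c:]"]) (simp add: Kc)
  qed
next
  case (Suc d)
  fix K :: "rat poly" assume sym: "pcompose K [:1,-1:] = K" and deg: "degree K \<le> 2 * Suc d + 1"
  define k0 where "k0 = poly K 0"
  have "poly (K - [:k0:]) 0 = 0" by (simp add: k0_def)
  then obtain K1 where K1: "K - [:k0:] = [:0,1:] * K1"
    using poly_eq_0_iff_dvd[of "K - [:k0:]" 0] by (auto elim: dvdE)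
  have "poly K 1 = poly K 0"
    using arg_cong[OF sym, of "\<lambda>p. poly p 0"] by (simp add: poly_pcompose)
  then have "poly (K - [:k0:]) 1 = 0" by (simp add: k0_def)
  then have "poly K1 1 = 0" using K1 by simp
  then obtain K2 where K2: "K1 = [:-1,1:] * K2"
    using poly_eq_0_iff_dvd[of K1 1] by (auto elim: dvdE)
  define v :: "rat poly" where "v = [:0,-1,1:]"
  have "K - [:k0:] = v * K2"
    using K1 K2 v_fact unfolding v_def by (simp add: mult.assoc[symmetric])
  then have Kv: "K = [:k0:] + v * K2" by (simp add: diff_eq_eq add.commute)
  have "[:k0:] + v * pcompose K2 [:1,-1:] = [:k0:] + v * K2"
  proof -
    have "pcompose K [:1,-1:] = [:k0:] + v * pcompose K2 [:1,-1:]"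
      unfolding Kv by (simp only: pcompose_add pcompose_mult pcompose_const v_def v_comp)
    then show ?thesis using sym Kv by simp
  qed
  then have "v * pcompose K2 [:1,-1:] = v * K2" by (simp only: add_left_cancel)
  then have symK2: "pcompose K2 [:1,-1:] = K2"
    by (subst (asm) mult_left_cancel) (simp_all add: v_def)
  have degK2: "degree K2 \<le> 2 * d + 1"
  proof (cases "K2 = 0")
    case True then show ?thesis by simp
  next
    case False
    have "degree (v * K2) = degree v + degree K2"
      by (rule degree_mult_eq) (simp_all add: False v_def)
    moreover have "degree v = 2" by (simp add: v_def)
    ultimately have "degree (v * K2) = 2 + degree K2" by simp
    moreover have "v * K2 = K - [:k0:]" using Kv by simp
    moreover have "degree (K - [:k0:]) \<le> degree K"
      using degree_diff_le_max[of K "[:k0:]"] by simp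
    ultimately show ?thesis using deg by simp
  qed
  obtain Q2 where Q2: "degree Q2 \<le> d" "K2 = pcompose Q2 [:0,-1,1:]"
    using Suc.IH[OF symK2 degK2] by blast
  show "\<exists>Q. degree Q \<le> Suc d \<and> K = pcompose Q [:0,-1,1:]"
  proof (intro exI conjI)
    show "degree (pCons k0 Q2) \<le> Suc d"
      using Q2(1) degree_pCons_le[of k0 Q2] by simp
    show "K = pcompose (pCons k0 Q2) [:0,-1,1:]"
      unfolding pcompose_pCons using Kv Q2(2) v_def by simp
  qed
qed

lemma antisym_lemma:
  fixes D :: "rat poly"
  assumes anti: "pcompose D [:1,-1:] = - D" and deg: "degree D \<le> 2 * N + 2"
  shows "\<exists>Q. degree Q \<le> N \<and> D = [:-1,2:] * pcompose Q [:0,-1,1:]"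
proof -
  have "poly D (1/2) = - poly D (1/2)"
    using arg_cong[OF anti, of "\<lambda>p. poly p (1/2)"] by (simp add: poly_pcompose)
  then have "poly D (1/2) = 0" by simp
  then obtain K where K: "D = [:-(1/2),1:] * K"
    using poly_eq_0_iff_dvd[of D "1/2"] by (auto elim: dvdE)
  have "pcompose [:-(1/2),1:] [:1,-1:] = - [:-(1/2),1::rat:]"
    by (simp add: pcompose_pCons)
  then have "pcompose D [:1,-1:] = - [:-(1/2),1::rat:] * pcompose K [:1,-1:]"
    unfolding K pcompose_mult by simp
  then have "[:-(1/2),1:] * pcompose K [:1,-1:] = [:-(1/2),1:] * K"
    using anti K by (metis minus_mult_left neg_equal_iff_equal)
  then have symK: "pcompose K [:1,-1:] = K"
    by (subst (asm) mult_left_cancel) simp_all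
  have degK: "degree K \<le> 2 * N + 1"
  proof (cases "K = 0")
    case True then show ?thesis by simp
  next
    case False
    have "degree D = degree [:-(1/2),1::rat:] + degree K" unfolding K
      by (rule degree_mult_eq) (simp_all add: False)
    then show ?thesis using deg by simp
  qed
  obtain Q0 where Q0: "degree Q0 \<le> N" "K = pcompose Q0 [:0,-1,1:]"
    using sym_lemma[OF symK degK] by blast
  show ?thesis
  proof (intro exI conjI)
    show "degree (smult (1/2) Q0) \<le> N" using Q0(1) by simp
    have h: "smult (1/2) [:-1,2::rat:] = [:-(1/2),1:]" by simp
    have "[:-1,2:] * pcompose (smult (1/2) Q0) [:0,-1,1:] = smult (1/2) [:-1,2:] * pcompose Q0 [:0,-1,1:]"
      by (simp only: pcompose_smult mult_smult_right mult_smult_left)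
    then show "D = [:-1,2:] * pcompose (smult (1/2) Q0) [:0,-1,1:]"
      unfolding K Q0(2) h by simp
  qed
qed

lemma comp_low:
  fixes Q :: "rat poly"
  shows "coeff (pcompose Q [:0,-1,1:]) 0 = coeff Q 0"
    and "coeff (pcompose Q [:0,-1,1:]) 1 = - coeff Q 1"
    and "coeff (pcompose Q [:0,-1,1:]) 2 = coeff Q 1 + coeff Q 2"
proof -
  obtain a Q1 where Q: "Q = pCons a Q1" by (cases Q) auto
  obtain b Q2 where Q1: "Q1 = pCons b Q2" by (cases Q1) auto
  have T: "pcompose Q1 [:0,-1,1:] = [:b:] + [:0,-1,1:] * pcompose Q2 [:0,-1,1:]"
    unfolding Q1 pcompose_pCons ..
  have P: "pcompose Q [:0,-1,1:] = [:a:] + [:0,-1,1:] * pcompose Q1 [:0,-1,1:]"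
    unfolding Q pcompose_pCons ..
  have c0: "coeff (pcompose Q1 [:0,-1,1:]) 0 = b" by (simp add: Q1)
  have c0': "poly Q1 0 = b" by (simp add: Q1)
  have c1: "coeff (pcompose Q1 [:0,-1,1:]) (Suc 0) = - coeff Q2 0"
    unfolding T by (simp add: coeff_mult_1 coeff_mult poly_0_coeff_0)
  show "coeff (pcompose Q [:0,-1,1:]) 0 = coeff Q 0" unfolding P Q by (simp add: coeff_mult)
  have qb: "coeff Q (Suc 0) = b" "coeff Q 2 = coeff Q2 0" "coeff Q (Suc (Suc 0)) = coeff Q2 0"
    by (simp_all add: Q Q1 numeral_2_eq_2)
  show "coeff (pcompose Q [:0,-1,1:]) 1 = - coeff Q 1"
    unfolding P by (simp add: coeff_mult_1 c0 c0' qb)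
  show "coeff (pcompose Q [:0,-1,1:]) 2 = coeff Q 1 + coeff Q 2"
    unfolding P coeff_add coeff_mult_2 by (simp add: c0 c0' c1 qb numeral_2_eq_2)
qed

lemma D_low:
  fixes Q :: "rat poly"
  defines "D \<equiv> [:-1,2:] * pcompose Q [:0,-1,1:]"
  shows "coeff D 0 = - coeff Q 0"
    and "coeff D 1 = 2 * coeff Q 0 + coeff Q 1"
    and "coeff D 2 = - 3 * coeff Q 1 - coeff Q 2"
proof -
  show "coeff D 0 = - coeff Q 0" unfolding D_def using comp_low(1)[of Q] by (simp add: coeff_mult)
  show "coeff D 1 = 2 * coeff Q 0 + coeff Q 1" unfolding D_def
    using comp_low(1,2)[of Q] by (simp add: coeff_mult_1)
  show "coeff D 2 = - 3 * coeff Q 1 - coeff Q 2" unfolding D_def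
    using comp_low(1,2,3)[of Q] by (simp add: coeff_mult_2 numeral_2_eq_2)
qed


declare bernoulli.simps[simp del]

lemma poly_expand:
  fixes Q :: "rat poly"
  assumes "degree Q \<le> N"
  shows "poly Q y = coeff Q 0 + (\<Sum>i=1..N. coeff Q i * y ^ i)"
proof -
  have "poly Q y = (\<Sum>i\<le>degree Q. coeff Q i * y ^ i)" by (rule poly_altdef)
  also have "\<dots> = (\<Sum>i\<le>N. coeff Q i * y ^ i)"
    using assms by (intro sum.mono_neutral_left) (auto simp: coeff_eq_0)
  also have "\<dots> = (\<Sum>i=0..N. coeff Q i * y ^ i)" by (simp add: atMost_atLeast0)
  also have "\<dots> = coeff Q 0 + (\<Sum>i=Suc 0..N. coeff Q i * y ^ i)"
    by (subst sum.atLeast_Suc_atMost) simp_all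
  finally show ?thesis by simp
qed

lemma main_poly:
  assumes "N \<ge> 1"
  obtains Q where "degree Q \<le> N"
    "\<And>j. E_fps (\<lambda>_. 0) j $ (N - 1) = (2 * of_nat j - 1) * poly Q (of_nat j * (of_nat j - 1))"
    "Fr WGp (Suc N) - Fr WHp (Suc N) = [:-1,2:] * pcompose Q [:0,-1,1:]"
proof -
  define DD where "DD = Fr WGp (Suc N) - Fr WHp (Suc N)"
  have r2: "pcompose [:1,-1:] [:1,-1:] = [:0,1::rat:]" by (simp add: pcompose_pCons)
  have h1: "pcompose (Fr WGp (Suc N)) [:1,-1:] = Fr WHp (Suc N)" by (rule GH_refl)
  have h2: "pcompose (Fr WHp (Suc N)) [:1,-1:] = Fr WGp (Suc N)"
    unfolding h1[symmetric] pcompose_assoc[symmetric] r2 by simp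
  have anti: "pcompose DD [:1,-1:] = - DD"
    unfolding DD_def pcompose_diff h1 h2 by simp
  have deg: "degree DD \<le> 2 * N + 2"
  proof -
    have "degree (Fr WGp (Suc N)) \<le> 2 * Suc N" by (rule Fr_deg) (rule WGp_deg)
    moreover have "degree (Fr WHp (Suc N)) \<le> 2 * Suc N" by (rule Fr_deg) (rule WHp_deg)
    ultimately show ?thesis unfolding DD_def
      using degree_diff_le[of "Fr WGp (Suc N)" "2 * Suc N" "Fr WHp (Suc N)"] by simp
  qed
  obtain Q where Q: "degree Q \<le> N" "DD = [:-1,2:] * pcompose Q [:0,-1,1:]"
    using antisym_lemma[OF anti deg] by blast
  show ?thesis
  proof (rule that[OF Q(1)])
    fix j
    have "E_fps (\<lambda>_. 0) j $ (N - 1) = poly DD (of_nat j)"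
      unfolding DD_def by (rule E_nth[OF assms])
    also have "\<dots> = (2 * of_nat j - 1) * poly Q (of_nat j * (of_nat j - 1))"
      unfolding Q(2) by (simp add: poly_pcompose algebra_simps)
    finally show "E_fps (\<lambda>_. 0) j $ (N - 1) = (2 * of_nat j - 1) * poly Q (of_nat j * (of_nat j - 1))" .
  next
    show "Fr WGp (Suc N) - Fr WHp (Suc N) = [:-1,2:] * pcompose Q [:0,-1,1:]"
      using Q(2) DD_def by simp
  qed
qed

lemma exists_c:
  assumes "degree Q \<le> N"
    "\<And>j. E_fps (\<lambda>_. 0) j $ (N - 1) = (2 * of_nat j - 1) * poly Q (of_nat j * (of_nat j - 1))"
  shows "S_const_coeffs N (coeff Q)"
  unfolding S_const_coeffs_def using assms poly_expand[OF assms(1)] by simp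

lemma inj_sq: "inj (\<lambda>k::nat. (of_nat (Suc k) * (of_nat (Suc k) - 1) :: rat))"
proof (rule injI)
  have mono: "Suc a * a < Suc b * b" if "a < b" for a b :: nat
  proof -
    have "Suc a * a \<le> Suc a * b" by (rule mult_le_mono2) (simp add: that less_imp_le)
    also have "\<dots> < Suc b * b" by (rule mult_less_mono1) (simp_all add: that, use that in simp)
    finally show ?thesis .
  qed
  fix a b :: nat
  assume "(of_nat (Suc a) * (of_nat (Suc a) - 1) :: rat) = of_nat (Suc b) * (of_nat (Suc b) - 1)"
  then have "(of_nat (Suc a * a) :: rat) = of_nat (Suc b * b)" by (simp add: algebra_simps)
  then have e: "Suc a * a = Suc b * b" by (simp only: of_nat_eq_iff)
  show "a = b"
  proof (rule ccontr)
    assume "a \<noteq> b"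
    then have "a < b \<or> b < a" by auto
    then show False using mono[of a b] mono[of b a] e by auto
  qed
qed

lemma uniq_c:
  assumes "\<And>j. E_fps (\<lambda>_. 0) j $ (N - 1) = (2 * of_nat j - 1) * poly Q (of_nat j * (of_nat j - 1))"
    and "S_const_coeffs N c" and "i \<le> N"
  shows "c i = coeff Q i"
proof -
  define C where "C = [:c 0:] + (\<Sum>k=1..N. monom (c k) k)"
  have pC: "poly C y = c 0 + (\<Sum>k=1..N. c k * y ^ k)" for y
    by (simp add: C_def poly_sum poly_monom)
  have "poly (Q - C) (of_nat (Suc k) * (of_nat (Suc k) - 1)) = 0" for k
  proof -
    define j where "j = Suc k"
    have nz: "(2 * of_nat j - 1 :: rat) \<noteq> 0"
    proof
      assume "(2 * of_nat j - 1 :: rat) = 0"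
      then have "(2 * of_nat j :: rat) = 1" by simp
      then have "(of_nat (2 * j) :: rat) = of_nat 1" by simp
      then have "2 * j = 1" by (simp only: of_nat_eq_iff)
      then show False by simp
    qed
    from assms(2) have "E_fps (\<lambda>_. 0) j $ (N - 1) =
      (2 * of_nat j - 1) * (0 + c 0 + (\<Sum>i=1..N. c i * (of_nat j * (of_nat j - 1)) ^ i))"
      unfolding S_const_coeffs_def j_def by simp
    with assms(1)[of j] nz have "poly Q (of_nat j * (of_nat j - 1)) = poly C (of_nat j * (of_nat j - 1))"
      by (simp add: pC)
    then show ?thesis by (simp add: j_def)
  qed
  then have "Q - C = 0" by (intro poly_zero_inj[OF inj_sq]) simp
  then have QC: "Q = C" by simp
  show ?thesis
  proof (cases "i = 0")
    case True
    then show ?thesis unfolding QC C_def by (simp add: coeff_sum)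
  next
    case False
    then have "i \<in> {1..N}" using assms(3) by simp
    moreover obtain i' where "i = Suc i'" using False by (cases i) auto
    ultimately show ?thesis unfolding QC C_def by (simp add: coeff_sum coeff_monom)
  qed
qed



lemma b0: "bernoulli 0 = 1" by (subst bernoulli.simps) simp
lemma b1: "bernoulli (Suc 0) = - 1 / 2" by (subst bernoulli.simps) (simp add: b0)

lemma DD_c0: "coeff (Fr WGp (Suc N)) 0 - coeff (Fr WHp (Suc N)) 0 = 0"
  by (simp add: Fr_c0[OF WGp_c0] Fr_c0[OF WHp_c0])

lemma DD_c1: "coeff (Fr WGp (Suc N)) 1 - coeff (Fr WHp (Suc N)) 1 =
   ((-1) ^ Suc N * bernoulli (Suc N) + bernoulli (Suc N)) / of_nat (Suc N)"
  unfolding Fr_c1[OF WGp_c0] Fr_c1[OF WHp_c0] WGp_c1 WHp_c1 by (simp add: diff_divide_distrib)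

lemma Fr_c1': "coeff (Fr W (Suc m)) (Suc 0) = coeff (W m) (Suc 0) / of_nat (Suc m)" if "\<And>r. coeff (W r) 0 = 0"
  using Fr_c1[of W m, OF that] by simp

lemma gen_alg: "(s * b / d) * (t * b') - (- b / d) * (- b') = (s * t - 1) * (b * b' / d)" for s t b b' d :: rat
  by (simp add: divide_inverse algebra_simps)

lemma term_formula:
  assumes "k < N" "even N"
  shows "coeff (Fr WGp (Suc k)) 1 * coeff (WGp (N - Suc k)) 1 - coeff (Fr WHp (Suc k)) 1 * coeff (WHp (N - Suc k)) 1
     = - 2 * (bernoulli (Suc k) * bernoulli (N - k) / of_nat (Suc k))"
proof -
  have sN: "Suc (N - Suc k) = N - k" using assms by simp
  have sg: "(-1::rat) ^ Suc k * (-1) ^ (N - k) = -1"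
  proof -
    have "(-1::rat) ^ Suc k * (-1) ^ (N - k) = (-1) ^ (Suc k + (N - k))" by (simp add: power_add)
    also have "Suc k + (N - k) = Suc N" using assms by simp
    finally show ?thesis using assms by simp
  qed
  have "coeff (Fr WGp (Suc k)) 1 * coeff (WGp (N - Suc k)) 1 - coeff (Fr WHp (Suc k)) 1 * coeff (WHp (N - Suc k)) 1
     = ((-1) ^ Suc k * bernoulli (Suc k) / of_nat (Suc k)) * ((-1) ^ (N - k) * bernoulli (N - k))
       - (- bernoulli (Suc k) / of_nat (Suc k)) * (- bernoulli (N - k))"
    unfolding Fr_c1[OF WGp_c0] Fr_c1[OF WHp_c0] WGp_c1 WHp_c1 sN ..
  also have "\<dots> = ((-1) ^ Suc k * (-1) ^ (N - k) - 1) * (bernoulli (Suc k) * bernoulli (N - k) / of_nat (Suc k))"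
    by (rule gen_alg)
  also have "\<dots> = - 2 * (bernoulli (Suc k) * bernoulli (N - k) / of_nat (Suc k))"
    unfolding sg by simp
  finally show ?thesis .
qed

lemma DD_c2_even:
  assumes "n \<ge> 1"
  shows "coeff (Fr WGp (Suc (2 * n))) 2 - coeff (Fr WHp (Suc (2 * n))) 2 = bernoulli (2 * n) / of_nat (2 * n)"
proof -
  define N where "N = 2 * n"
  have evN: "even N" and N2: "N \<ge> 2" using assms by (auto simp: N_def)
  define t where "t i = coeff (Fr WGp i) 1 * coeff (WGp (N - i)) 1 - coeff (Fr WHp i) 1 * coeff (WHp (N - i)) 1" for i
  have WGH: "WGp N = WHp N"
    using evN by (simp add: WGp_def WHp_def)
  have "coeff (Fr WGp (Suc N)) 2 - coeff (Fr WHp (Suc N)) 2 = (\<Sum>i=0..N. t i) / of_nat (Suc N)"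
    unfolding Fr_c2[OF WGp_c0] Fr_c2[OF WHp_c0] WGH t_def
    by (simp add: sum_subtractf diff_divide_distrib add_divide_distrib)
  also have "(\<Sum>i=0..N. t i) = (\<Sum>i=0..N. (if i = 1 then bernoulli N else 0) + (if i = N then bernoulli N / of_nat N else 0))"
  proof (rule sum.cong[OF refl])
    fix i assume i: "i \<in> {0..N}"
    show "t i = (if i = 1 then bernoulli N else 0) + (if i = N then bernoulli N / of_nat N else 0)"
    proof (cases i)
      case 0 then show ?thesis using N2 by (simp add: t_def)
    next
      case (Suc k)
      then have kN: "k < N" using i by simp
      have tk: "t i = - 2 * (bernoulli (Suc k) * bernoulli (N - k) / of_nat (Suc k))"
        unfolding t_def Suc by (rule term_formula[OF kN evN])
      show ?thesis
      proof (cases "k = 0")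
        case True then show ?thesis using tk Suc N2 by (simp add: b1)
      next
        case False
        show ?thesis
        proof (cases "Suc k = N")
          case True
          then have "N - k = 1" by simp
          then show ?thesis using tk Suc True False by (simp add: b1)
        next
          case False2: False
          have "bernoulli (Suc k) * bernoulli (N - k) = 0"
          proof (cases "even k")
            case True
            then have "odd (Suc k)" by simp
            moreover have "Suc k \<ge> 3" using True \<open>k \<noteq> 0\<close> by presburger
            ultimately show ?thesis using bernoulli_odd[of "Suc k"] by simp
          next
            case False
            then have "odd (N - k)" using evN kN by simp
            moreover have "N - k \<ge> 3"
            proof -
              have "Suc k \<noteq> N" using False2 .
              then have "Suc k < N" using kN by simp
              moreover have "N - k \<noteq> 2" using evN False kN by presburger
              ultimately show ?thesis by simp
            qed
            ultimately show ?thesis using bernoulli_odd[of "N - k"] by simp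
          qed
          then show ?thesis using tk Suc \<open>k \<noteq> 0\<close> False2 by simp
        qed
      qed
    qed
  qed
  also have "\<dots> = bernoulli N + bernoulli N / of_nat N"
    using N2 by (simp add: sum.distrib)
  finally have "coeff (Fr WGp (Suc N)) 2 - coeff (Fr WHp (Suc N)) 2 = (bernoulli N + bernoulli N / of_nat N) / of_nat (Suc N)" .
  also have "\<dots> = bernoulli N / of_nat N"
  proof -
    have Nz: "(of_nat N :: rat) \<noteq> 0" using N2 by simp
    have e: "bernoulli N + bernoulli N / of_nat N = (bernoulli N / of_nat N) * of_nat (Suc N)"
      using Nz by (simp add: field_simps)
    have "(of_nat (Suc N) :: rat) \<noteq> 0" by (simp only: of_nat_eq_0_iff)
    then show ?thesis unfolding e by simp
  qed
  finally show ?thesis unfolding N_def .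
qed



theorem proposition4p6:
  fixes n :: nat
  assumes "n \<ge> 1"
  shows "(\<exists>c. S_const_coeffs (2 * n) c) \<and> (\<exists>c. S_const_coeffs (2 * n - 1) c) \<and>
    (\<forall>c. S_const_coeffs (2 * n) c \<longrightarrow>
        c 1 = 0 \<and> c 2 = - bernoulli (2 * n) / (2 * of_nat n)) \<and>
    (\<forall>c. S_const_coeffs (2 * n - 1) c \<longrightarrow> c 1 = bernoulli (2 * n) / of_nat n)"
proof -
  have A1: "2 * n \<ge> 1" and A2: "2 * n - 1 \<ge> 1" using assms by auto
  obtain Q1 where Q1: "degree Q1 \<le> 2 * n"
    "\<And>j. E_fps (\<lambda>_. 0) j $ (2 * n - 1) = (2 * of_nat j - 1) * poly Q1 (of_nat j * (of_nat j - 1))"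
    "Fr WGp (Suc (2 * n)) - Fr WHp (Suc (2 * n)) = [:-1,2:] * pcompose Q1 [:0,-1,1:]"
    using main_poly[OF A1] by blast
  obtain Q2 where Q2: "degree Q2 \<le> 2 * n - 1"
    "\<And>j. E_fps (\<lambda>_. 0) j $ (2 * n - 1 - 1) = (2 * of_nat j - 1) * poly Q2 (of_nat j * (of_nat j - 1))"
    "Fr WGp (Suc (2 * n - 1)) - Fr WHp (Suc (2 * n - 1)) = [:-1,2:] * pcompose Q2 [:0,-1,1:]"
    using main_poly[OF A2] by blast
  have e1: "\<exists>c. S_const_coeffs (2 * n) c" using exists_c[OF Q1(1,2)] by blast
  have e2: "\<exists>c. S_const_coeffs (2 * n - 1) c" using exists_c[OF Q2(1,2)] by blast
  have q10: "coeff Q1 0 = 0"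
    using D_low(1)[of Q1] DD_c0[of "2 * n"] arg_cong[OF Q1(3), of "\<lambda>p. coeff p 0"] by simp
  have q11: "coeff Q1 1 = 0"
  proof -
    have "coeff (Fr WGp (Suc (2 * n))) 1 - coeff (Fr WHp (Suc (2 * n))) 1 = 2 * coeff Q1 0 + coeff Q1 1"
      using D_low(2)[of Q1] arg_cong[OF Q1(3), of "\<lambda>p. coeff p 1"] by simp
    moreover have "coeff (Fr WGp (Suc (2 * n))) 1 - coeff (Fr WHp (Suc (2 * n))) 1 = 0"
      unfolding DD_c1 by simp
    ultimately show ?thesis using q10 by simp
  qed
  have q12: "coeff Q1 2 = - bernoulli (2 * n) / (2 * of_nat n)"
  proof -
    have "coeff (Fr WGp (Suc (2 * n))) 2 - coeff (Fr WHp (Suc (2 * n))) 2 = - 3 * coeff Q1 1 - coeff Q1 2"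
      using D_low(3)[of Q1] arg_cong[OF Q1(3), of "\<lambda>p. coeff p 2"] by simp
    then have "bernoulli (2 * n) / of_nat (2 * n) = - coeff Q1 2"
      using DD_c2_even[OF assms] q11 by simp
    then show ?thesis by (simp add: minus_divide_left)
  qed
  have q20: "coeff Q2 0 = 0"
    using D_low(1)[of Q2] DD_c0[of "2 * n - 1"] arg_cong[OF Q2(3), of "\<lambda>p. coeff p 0"] by simp
  have q21: "coeff Q2 1 = bernoulli (2 * n) / of_nat n"
  proof -
    have "coeff (Fr WGp (Suc (2 * n - 1))) 1 - coeff (Fr WHp (Suc (2 * n - 1))) 1 = 2 * coeff Q2 0 + coeff Q2 1"
      using D_low(2)[of Q2] arg_cong[OF Q2(3), of "\<lambda>p. coeff p 1"] by simp
    moreover have "Suc (2 * n - 1) = 2 * n" using assms by simp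
    moreover have "((-1) ^ (2 * n) * bernoulli (2 * n) + bernoulli (2 * n)) / of_nat (2 * n) = bernoulli (2 * n) / of_nat n"
      using assms by (simp add: field_simps)
    ultimately show ?thesis using q20 DD_c1[of "2 * n - 1"] by simp
  qed
  have c1: "\<forall>c. S_const_coeffs (2 * n) c \<longrightarrow> c 1 = 0 \<and> c 2 = - bernoulli (2 * n) / (2 * of_nat n)"
  proof (intro allI impI)
    fix c assume "S_const_coeffs (2 * n) c"
    then have "c 1 = coeff Q1 1" "c 2 = coeff Q1 2"
      using uniq_c[OF Q1(2)] assms by auto
    then show "c 1 = 0 \<and> c 2 = - bernoulli (2 * n) / (2 * of_nat n)" using q11 q12 by simp
  qed
  have c2: "\<forall>c. S_const_coeffs (2 * n - 1) c \<longrightarrow> c 1 = bernoulli (2 * n) / of_nat n"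
  proof (intro allI impI)
    fix c assume "S_const_coeffs (2 * n - 1) c"
    then have "c 1 = coeff Q2 1"
      using uniq_c[OF Q2(2)] A2 by auto
    then show "c 1 = bernoulli (2 * n) / of_nat n" using q21 by simp
  qed
  show ?thesis using e1 e2 c1 c2 by blast
qed


end
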